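(* Let $\mathbb{K}$ be a field and $f=a_0(x)+a_1(x)y+\cdots+a_n(x)y^n\in\mathbb{K}[x,y]$ with $n\geq 2$, $a_0,\ldots,a_{n-1}\in\mathbb{K}[x]$, $a_n\in\mathbb{K}$, $a_0a_n\neq 0$, and suppose there exists an index $j$ with $0\leq j\leq n-1$ such that $\deg a_j>\max_{i\neq j}\deg a_i$. Then $f$ is a product of at most $n-j$ irreducible polynomials over $\mathbb{K}[x]$. In particular, if $j=n-1$, then $f$ is irreducible over $\mathbb{K}[x]$.
   Context: $f$ is regarded as a polynomial in $y$ with coefficients in $\mathbb{K}[x]$; "a product of at most $k$ irreducible polynomials over $\mathbb{K}[x]$" means that in the factorization of $f$ into irreducible elements of $\mathbb{K}[x][y]$ the number of factors, counted with multiplicities, is at most $k$. *)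

theory Defs
  imports "HOL-Computational_Algebra.Polynomial_Factorial"
begin

end

theory Submission
  imports Defs
begin

definition subN :: "nat \<Rightarrow> 'a::comm_ring_1 poly \<Rightarrow> 'a poly" where
  "subN N a = pcompose a (monom 1 N)"

definition Phi :: "nat \<Rightarrow> 'a::comm_ring_1 poly poly \<Rightarrow> 'a poly" where
  "Phi N p = poly (map_poly (subN N) p) (monom 1 1)"

lemma subN_0 [simp]: "subN N 0 = 0" by (simp add: subN_def)

lemma map_poly_subN_mult:
  "map_poly (subN N) (p * q) = map_poly (subN N) p * map_poly (subN N) q"
proof (rule poly_eqI)
  fix n
  show "coeff (map_poly (subN N) (p * q)) n = coeff (map_poly (subN N) p * map_poly (subN N) q) n"
    by (simp add: coeff_map_poly coeff_mult subN_def pcompose_sum pcompose_mult)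
qed

lemma Phi_mult: "Phi N (p * q) = Phi N p * Phi N q"
  by (simp add: Phi_def map_poly_subN_mult)

lemma Phi_1: "Phi N 1 = 1"
  by (simp add: Phi_def map_poly_1 subN_def pcompose_1)

lemma coeff_subN:
  fixes a :: "'a::comm_ring_1 poly"
  assumes "0 < N"
  shows "coeff (subN N a) i = (if N dvd i then coeff a (i div N) else 0)"
  unfolding subN_def
proof (induction a arbitrary: i)
  case 0
  then show ?case by simp
next
  case (pCons c a)
  show ?case
  proof (cases "i < N")
    case True
    then show ?thesis using assms
      by (auto simp: pcompose_pCons coeff_monom_mult dvd_imp_le coeff_pCons split: nat.split)
  next
    case False
    then have "N dvd i \<longleftrightarrow> N dvd (i - N)" using assms
      by (simp add: dvd_minus_self)
    moreover have "i div N = Suc ((i - N) div N)" if "N dvd i"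
    proof -
      obtain k where k: "i = N * k" using \<open>N dvd i\<close> by blast
      with False assms have "k \<ge> 1" by (cases k) auto
      then have "i - N = N * (k - 1)" using k by (simp add: algebra_simps diff_mult_distrib2)
      then show ?thesis using k assms \<open>k \<ge> 1\<close> by simp
    qed
    ultimately show ?thesis using False assms
      by (auto simp: pcompose_pCons coeff_monom_mult pCons.IH coeff_pCons split: nat.split)
  qed
qed

lemma Phi_sum:
  fixes p :: "'a::comm_ring_1 poly poly"
  assumes "degree p < N"
  shows "Phi N p = (\<Sum>k<N. monom 1 k * subN N (coeff p k))"
proof -
  let ?q = "map_poly (subN N) p"
  have dq: "degree ?q < N" using assms map_poly_degree_leq le_less_trans by blast
  have "Phi N p = (\<Sum>k\<le>degree ?q. coeff ?q k * monom 1 1 ^ k)"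
    by (simp add: Phi_def poly_altdef)
  also have "\<dots> = (\<Sum>k<N. coeff ?q k * monom 1 1 ^ k)"
  proof (rule sum.mono_neutral_left)
    show "{..degree ?q} \<subseteq> {..<N}" using dq by auto
    show "\<forall>i\<in>{..<N} - {..degree ?q}. coeff ?q i * monom 1 1 ^ i = 0"
      by (auto simp: coeff_eq_0)
  qed auto
  also have "\<dots> = (\<Sum>k<N. monom 1 k * subN N (coeff p k))"
    by (intro sum.cong) (auto simp: coeff_map_poly monom_power mult.commute)
  finally show ?thesis .
qed

lemma coeff_Phi:
  fixes p :: "'a::comm_ring_1 poly poly"
  assumes "0 < N" "degree p < N" "s < N"
  shows "coeff (Phi N p) (N * e + s) = coeff (coeff p s) e"
proof -
  have "coeff (Phi N p) (N * e + s) = (\<Sum>k<N. coeff (monom 1 k * subN N (coeff p k)) (N * e + s))"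
    by (simp add: Phi_sum[OF assms(2)] coeff_sum)
  also have "\<dots> = (\<Sum>k\<in>{s}. coeff (monom 1 k * subN N (coeff p k)) (N * e + s))"
  proof (rule sum.mono_neutral_right)
    show "\<forall>k\<in>{..<N} - {s}. coeff (monom 1 k * subN N (coeff p k)) (N * e + s) = 0"
    proof
      fix k assume k: "k \<in> {..<N} - {s}"
      show "coeff (monom 1 k * subN N (coeff p k)) (N * e + s) = 0"
      proof (cases "N * e + s < k")
        case True then show ?thesis by (simp add: coeff_monom_mult)
      next
        case False
        have "\<not> N dvd (N * e + s - k)"
        proof
          assume d: "N dvd (N * e + s - k)"
          show False
          proof (cases "k \<le> s")
            case True
            then have "N * e + s - k = N * e + (s - k)" by simp
            with d have "N dvd (s - k)" by (simp add: dvd_add_right_iff)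
            moreover have "s - k < N" "s - k > 0" using True k assms by auto
            ultimately show False using nat_dvd_not_less by blast
          next
            case kl: False
            then have e: "e \<ge> 1" using False k by (cases e) auto
            have "N * e + s - k = N * (e - 1) + (N + s - k)" using e kl k
              by (cases e) (auto simp: algebra_simps)
            with d have "N dvd (N + s - k)" by (simp add: dvd_add_right_iff)
            moreover have "N + s - k < N" "N + s - k > 0" using kl k assms by auto
            ultimately show False using nat_dvd_not_less by blast
          qed
        qed
        then show ?thesis using False assms by (simp add: coeff_monom_mult coeff_subN)
      qed
    qed
  qed (use assms in auto)
  also have "\<dots> = coeff (coeff p s) e"
    using assms by (simp add: coeff_monom_mult coeff_subN)
  finally show ?thesis .
qed

lemma Phi_nz:
  fixes p :: "'a::comm_ring_1 poly poly"
  assumes "0 < N" "p \<noteq> 0" "degree p < N"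
  shows "Phi N p \<noteq> 0"
proof -
  have "coeff (Phi N p) (N * degree (lead_coeff p) + degree p) = lead_coeff (lead_coeff p)"
    using coeff_Phi[OF assms(1,3,3)] by simp
  also have "\<dots> \<noteq> 0" using assms by simp
  finally show ?thesis by auto
qed

definition B :: "nat \<Rightarrow> 'a::comm_ring_1 poly poly \<Rightarrow> nat" where
  "B N g = degree (Phi N (reflect_poly g))"

lemma B_mult:
  fixes g h :: "'a::idom poly poly"
  assumes "0 < N" "g \<noteq> 0" "h \<noteq> 0" "degree g < N" "degree h < N"
  shows "B N (g * h) = B N g + B N h"
proof -
  have "reflect_poly g \<noteq> 0" "reflect_poly h \<noteq> 0" using assms by auto
  moreover have "degree (reflect_poly g) < N" "degree (reflect_poly h) < N"
    using assms degree_reflect_poly_le le_less_trans by blast+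
  ultimately have "Phi N (reflect_poly g) \<noteq> 0" "Phi N (reflect_poly h) \<noteq> 0"
    using Phi_nz assms(1) by blast+
  then show ?thesis
    by (simp add: B_def reflect_poly_mult Phi_mult degree_mult_eq)
qed

lemma B_1: "B N 1 = 0"
  by (simp add: B_def Phi_1)

lemma B_factor:
  fixes g :: "'a::idom poly poly"
  assumes "0 < N" "g \<noteq> 0" "degree g < N" "coeff g 0 \<noteq> 0"
  shows "B N g mod N \<le> degree g"
    and "degree g \<ge> 1 \<Longrightarrow> degree (lead_coeff g) = 0 \<Longrightarrow> 1 \<le> B N g mod N"
proof -
  let ?r = "reflect_poly g"
  let ?P = "Phi N ?r"
  have dr: "degree ?r = degree g" using assms by simp
  have rnz: "?r \<noteq> 0" using assms by simp
  have Pnz: "?P \<noteq> 0" using Phi_nz[OF assms(1) rnz] dr assms by simp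
  define b where "b = B N g"
  have bdef: "b = N * (b div N) + b mod N" by simp
  have cP: "coeff ?P b \<noteq> 0" using Pnz by (simp add: b_def B_def)
  have mN: "b mod N < N" using assms by simp
  have key: "coeff (coeff ?r (b mod N)) (b div N) \<noteq> 0"
    using cP coeff_Phi[OF assms(1) _ mN, of ?r "b div N"] dr assms bdef by simp
  then have "coeff ?r (b mod N) \<noteq> 0" by auto
  then have "b mod N \<le> degree ?r" using le_degree by blast
  then show "B N g mod N \<le> degree g" using dr b_def by simp
  assume g1: "degree g \<ge> 1" and lc: "degree (lead_coeff g) = 0"
  show "1 \<le> B N g mod N"
  proof (rule ccontr)
    assume "\<not> 1 \<le> B N g mod N"
    then have m0: "b mod N = 0" using b_def by simp
    have "coeff ?r 0 = lead_coeff g" by (simp add: coeff_reflect_poly)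
    with key m0 have "coeff (lead_coeff g) (b div N) \<noteq> 0" by simp
    then have "b div N \<le> 0" using lc le_degree by fastforce
    with m0 bdef have b0: "b = 0" by simp
    have "coeff ?r (degree g) = coeff g 0" by (simp add: coeff_reflect_poly)
    then have "coeff ?P (N * degree (coeff g 0) + degree g) = coeff (coeff g 0) (degree (coeff g 0))"
      using coeff_Phi[OF assms(1), of ?r "degree g" "degree (coeff g 0)"] dr assms by simp
    also have "\<dots> \<noteq> 0" using assms by simp
    finally have "N * degree (coeff g 0) + degree g \<le> degree ?P" using le_degree by blast
    then have "b \<ge> 1" using g1 by (simp add: b_def B_def)
    with b0 show False by simp
  qed
qed

lemma B_prod:
  fixes fs :: "'a::idom poly poly multiset"
  assumes "0 < N" "\<forall>g\<in>#fs. g \<noteq> 0 \<and> coeff g 0 \<noteq> 0 \<and> degree g \<ge> 1 \<and> degree (lead_coeff g) = 0"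
    "degree (prod_mset fs) < N"
  shows "size fs \<le> B N (prod_mset fs) mod N \<and> B N (prod_mset fs) mod N \<le> degree (prod_mset fs)"
  using assms(2,3)
proof (induction fs)
  case empty
  then show ?case by (simp add: B_1)
next
  case (add x M)
  let ?P = "prod_mset M"
  have x: "x \<noteq> 0" "coeff x 0 \<noteq> 0" "degree x \<ge> 1" "degree (lead_coeff x) = 0"
    using add.prems by auto
  have Pnz: "?P \<noteq> 0" using add.prems by (auto simp: prod_mset_zero_iff)
  have dd: "degree (x * ?P) = degree x + degree ?P" using x Pnz degree_mult_eq by blast
  have dx: "degree x < N" "degree ?P < N" using add.prems dd by auto
  have IH: "size M \<le> B N ?P mod N \<and> B N ?P mod N \<le> degree ?P"
    using add.IH add.prems dx by auto
  have Bx: "B N x mod N \<le> degree x" "1 \<le> B N x mod N"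
    using B_factor[OF assms(1) x(1) dx(1) x(2)] x by auto
  have Bm: "B N (x * ?P) = B N x + B N ?P" using B_mult[OF assms(1) x(1) Pnz dx] .
  have "B N (x * ?P) mod N = (B N x mod N + B N ?P mod N) mod N"
    by (simp add: Bm mod_add_eq)
  also have "\<dots> = B N x mod N + B N ?P mod N"
    using IH Bx dd add.prems by (intro mod_less) auto
  finally show ?case using IH Bx dd by simp
qed

lemma B_f:
  fixes f :: "'a :: field poly poly" and n j :: nat
  assumes "degree f = n" and "n \<ge> 2"
    and "coeff f 0 \<noteq> 0"
    and "j < n"
    and "\<forall>i\<le>n. i \<noteq> j \<longrightarrow> degree (coeff f i) < degree (coeff f j)"
    and "n < N"
  shows "B N f = N * degree (coeff f j) + (n - j)"
proof -
  let ?r = "reflect_poly f"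
  let ?d = "degree (coeff f j)"
  have N0: "0 < N" using assms by simp
  have dr: "degree ?r = n" using assms by simp
  have cr: "coeff ?r s = (if s > n then 0 else coeff f (n - s))" for s
    using assms by (simp add: coeff_reflect_poly)
  have "?d > 0"
  proof (cases "j = 0")
    case True
    then show ?thesis using assms(5)[rule_format, of 1] assms(2) by simp
  next
    case False
    then show ?thesis using assms(5)[rule_format, of 0] by simp
  qed
  then have fj: "coeff f j \<noteq> 0" by auto
  have "coeff (Phi N ?r) (N * ?d + (n - j)) = coeff (coeff ?r (n - j)) ?d"
    using coeff_Phi[OF N0, of ?r "n - j" ?d] dr assms by simp
  also have "\<dots> = lead_coeff (coeff f j)" using cr assms by simp
  also have "\<dots> \<noteq> 0" using fj by simp
  finally have ge: "N * ?d + (n - j) \<le> B N f" unfolding B_def using le_degree by blast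
  have le: "B N f \<le> N * ?d + (n - j)" unfolding B_def
  proof (rule degree_le, intro allI impI)
    fix i assume i: "N * ?d + (n - j) < i"
    have idef: "i = N * (i div N) + i mod N" by simp
    have mN: "i mod N < N" using N0 by simp
    have ce: "coeff (Phi N ?r) i = coeff (coeff ?r (i mod N)) (i div N)"
      using coeff_Phi[OF N0 _ mN, of ?r "i div N"] dr assms idef by simp
    have idN: "i div N \<ge> ?d"
    proof (rule ccontr)
      assume "\<not> ?d \<le> i div N"
      then have "i div N + 1 \<le> ?d" by simp
      then have "N * (i div N + 1) \<le> N * ?d" by (rule mult_le_mono2)
      then have "N + N * (i div N) \<le> N * ?d" by (simp add: algebra_simps)
      then have "i < N * ?d" using idef mN by linarith
      with i show False by simp
    qed
    show "coeff (Phi N ?r) i = 0"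
    proof (cases "i mod N > n")
      case True then show ?thesis using ce cr by simp
    next
      case False
      then have c2: "coeff (Phi N ?r) i = coeff (coeff f (n - i mod N)) (i div N)" using ce cr by simp
      show ?thesis
      proof (cases "n - i mod N = j")
        case True
        then have "i mod N = n - j" using False by simp
        have "i div N \<noteq> ?d"
        proof
          assume "i div N = ?d"
          then have "i = N * ?d + (n - j)" using idef \<open>i mod N = n - j\<close> by metis
          with i show False by simp
        qed
        then have "i div N > ?d" using idN by simp
        then show ?thesis using c2 True by (simp add: coeff_eq_0)
      next
        case nj: False
        then have "degree (coeff f (n - i mod N)) < ?d" using assms(5) by simp
        then show ?thesis using c2 idN by (simp add: coeff_eq_0)
      qed
    qed
  qed
  from ge le show ?thesis by simp
qed

lemma unit_poly_degree0:
  fixes f :: "'a::idom poly"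
  assumes "f dvd 1" shows "degree f = 0"
proof -
  obtain u where "1 = f * u" using assms by (auto elim: dvdE)
  then have "degree (f * u) = 0" by (metis degree_1)
  moreover have "f \<noteq> 0" "u \<noteq> 0" using \<open>1 = f * u\<close> by auto
  ultimately show ?thesis by (simp add: degree_mult_eq)
qed

lemma const_unit_poly:
  fixes g :: "'a::field poly poly"
  assumes "g \<noteq> 0" "degree g = 0" "degree (lead_coeff g) = 0"
  shows "g dvd 1"
proof -
  have geq: "g = [:lead_coeff g:]" using assms by (metis degree_0_id)
  have "lead_coeff g \<noteq> 0" using assms(1) by (rule leading_coeff_neq_0)
  then have "is_unit (lead_coeff g)" using assms is_unit_iff_degree by blast
  then show ?thesis using geq is_unit_const_poly_iff by metis
qed

lemma exists_fact:
  fixes f :: "'a::field poly poly"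
  assumes "f \<noteq> 0" "degree (lead_coeff f) = 0" "degree f \<ge> 1"
  shows "\<exists>fs. (\<forall>g\<in>#fs. irreducible g) \<and> f = prod_mset fs"
  using assms
proof (induction "degree f" arbitrary: f rule: less_induct)
  case less
  show ?case
  proof (cases "irreducible f")
    case True
    then show ?thesis by (intro exI[of _ "{#f#}"]) simp
  next
    case False
    have fnu: "\<not> f dvd 1"
    proof
      assume "f dvd 1"
      then have "degree f = 0" by (rule unit_poly_degree0)
      with less.prems show False by simp
    qed
    have "\<not> (\<forall>a b. f = a * b \<longrightarrow> a dvd 1 \<or> b dvd 1)"
      using False fnu less.prems(1) unfolding irreducible_def by simp
    then obtain a b where ab: "f = a * b" "\<not> a dvd 1" "\<not> b dvd 1"
      by blast
    have anz: "a \<noteq> 0" and bnz: "b \<noteq> 0" using ab less.prems by auto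
    have "degree (lead_coeff a * lead_coeff b) = 0" using ab less.prems lead_coeff_mult by metis
    then have la: "degree (lead_coeff a) = 0" and lb: "degree (lead_coeff b) = 0"
      using anz bnz by (simp_all add: degree_mult_eq)
    have da: "degree a \<ge> 1"
    proof (rule ccontr)
      assume "\<not> degree a \<ge> 1"
      then have "degree a = 0" by simp
      from const_unit_poly[OF anz this la] ab(2) show False by simp
    qed
    have db: "degree b \<ge> 1"
    proof (rule ccontr)
      assume "\<not> degree b \<ge> 1"
      then have "degree b = 0" by simp
      from const_unit_poly[OF bnz this lb] ab(3) show False by simp
    qed
    have dd: "degree f = degree a + degree b" using ab anz bnz degree_mult_eq by blast
    obtain fa where fa: "\<forall>g\<in>#fa. irreducible g" "a = prod_mset fa"
      using less.hyps[of a] anz la da db dd by force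
    obtain fb where fb: "\<forall>g\<in>#fb. irreducible g" "b = prod_mset fb"
      using less.hyps[of b] bnz lb da db dd by force
    have "(\<forall>g\<in>#fa + fb. irreducible g) \<and> f = prod_mset (fa + fb)"
      using fa fb ab(1) by auto
    then show ?thesis by blast
  qed
qed

theorem theorem5:
  fixes f :: "'a :: field poly poly" and n j :: nat
  assumes "degree f = n" and "n \<ge> 2"
    and "degree (coeff f n) = 0"
    and "coeff f 0 \<noteq> 0" and "coeff f n \<noteq> 0"
    and "j < n"
    and "\<forall>i\<le>n. i \<noteq> j \<longrightarrow> degree (coeff f i) < degree (coeff f j)"
  shows "(\<exists>fs :: 'a poly poly multiset. (\<forall>g\<in>#fs. irreducible g) \<and> f = prod_mset fs \<and> size fs \<le> n - j)
         \<and> (j = n - 1 \<longrightarrow> irreducible f)"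
proof -
  have fnz: "f \<noteq> 0" using assms by auto
  have fnu: "\<not> is_unit f"
  proof
    assume "is_unit f"
    then have "degree f = 0" by (rule unit_poly_degree0)
    with assms show False by simp
  qed
  have bound: "size fs \<le> n - j" if fs: "\<forall>g\<in>#fs. irreducible g" "f = prod_mset fs" for fs
  proof -
    define N where "N = n + 1"
    have N0: "0 < N" by (simp add: N_def)
    have props: "\<forall>g\<in>#fs. g \<noteq> 0 \<and> coeff g 0 \<noteq> 0 \<and> degree g \<ge> 1 \<and> degree (lead_coeff g) = 0"
    proof
      fix g assume g: "g \<in># fs"
      have irr: "irreducible g" using fs g by auto
      have "g dvd f" using fs g by (simp add: dvd_prod_mset)
      then obtain h where h: "f = g * h" by (auto elim: dvdE)
      have gnz: "g \<noteq> 0" and hnz: "h \<noteq> 0" using h fnz by auto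
      have "coeff f 0 = coeff g 0 * coeff h 0" using h coeff_mult_0 by simp
      then have c0: "coeff g 0 \<noteq> 0" using assms by auto
      have "lead_coeff f = lead_coeff g * lead_coeff h" using h lead_coeff_mult by simp
      moreover have "lead_coeff f = coeff f n" using assms by simp
      ultimately have "degree (lead_coeff g * lead_coeff h) = 0" using assms by simp
      then have lc: "degree (lead_coeff g) = 0" using gnz hnz by (simp add: degree_mult_eq)
      have dg: "degree g \<ge> 1"
      proof (rule ccontr)
        assume "\<not> degree g \<ge> 1"
        then have "degree g = 0" by simp
        then have geq: "g = [:lead_coeff g:]" by (metis degree_0_id)
        have "lead_coeff g \<noteq> 0" using gnz by simp
        then have "is_unit (lead_coeff g)" using lc is_unit_iff_degree by blast
        then have "is_unit g" using geq is_unit_const_poly_iff by metis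
        then show False using irr irreducible_not_unit by blast
      qed
      show "g \<noteq> 0 \<and> coeff g 0 \<noteq> 0 \<and> degree g \<ge> 1 \<and> degree (lead_coeff g) = 0"
        using gnz c0 dg lc by simp
    qed
    have "degree (prod_mset fs) < N" using fs assms by (simp add: N_def)
    then have "size fs \<le> B N (prod_mset fs) mod N" using B_prod[OF N0 props] by blast
    also have "B N (prod_mset fs) = N * degree (coeff f j) + (n - j)"
      using B_f[OF assms(1,2,4,6,7)] fs by (simp add: N_def)
    also have "\<dots> mod N = (n - j) mod N" by simp
    also have "\<dots> = n - j" using assms by (intro mod_less) (simp add: N_def)
    finally show ?thesis .
  qed
  obtain fs where irr: "\<forall>g\<in>#fs. irreducible g" and feq: "f = prod_mset fs"
  proof -
    have "lead_coeff f = coeff f n" using assms(1) by simp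
    then have "degree (lead_coeff f) = 0" using assms(3) by simp
    moreover have "degree f \<ge> 1" using assms(1,2) by simp
    ultimately show ?thesis using exists_fact[OF fnz] that by blast
  qed
  have part1: "\<exists>fs :: 'a poly poly multiset. (\<forall>g\<in>#fs. irreducible g) \<and> f = prod_mset fs \<and> size fs \<le> n - j"
    using irr feq bound by blast
  have part2: "irreducible f" if "j = n - 1"
  proof -
    have "size fs \<le> 1" using bound[OF irr feq] that assms by simp
    moreover have "size fs \<ge> 1"
    proof (rule ccontr)
      assume "\<not> size fs \<ge> 1"
      then have "size fs = 0" by linarith
      then have "fs = {#}" by simp
      then have "f = 1" using feq by simp
      then show False using assms by simp
    qed
    ultimately obtain g where "fs = {#g#}" by (metis One_nat_def size_1_singleton_mset le_antisym)
    then show ?thesis using irr feq by simp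
  qed
  show ?thesis using part1 part2 by blast
qed

end
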